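(* Let $\lambda\in[-1,1)$. Every continuous $\lambda$-curve $\gamma:I\to\mathbb{R}^d$ has the $\lambda$-cone property.
   Context: $\mathbb{R}^d$ carries the Euclidean inner product $\langle\cdot,\cdot\rangle$ and norm $\|\cdot\|$; $I\subset\mathbb{R}$ is an interval; $\mathbb{S}^{d-1}$ is the unit sphere. $\gamma$ is a $\lambda$-curve if for all $t_1\le t_2\le t_3$ in $I$: $\|\gamma(t_1)-\gamma(t_2)\|\le\|\gamma(t_1)-\gamma(t_3)\|+\lambda\|\gamma(t_2)-\gamma(t_3)\|$. For $t\in I$, the set of forward secants is $\mathrm{sec}^+(t)=\{q\in\mathbb{S}^{d-1}: q=\lim_k \frac{\gamma(t_k)-\gamma(t)}{\|\gamma(t_k)-\gamma(t)\|}$ for some sequence $t_k\to t$ with $t_k>t\}$. A continuous curve $\gamma$ has the $\lambda$-cone property if for every $t\in I$, every $q\in\mathrm{sec}^+(t)$ and every $u\in I$ with $u<t$: $\big\langle q,\frac{\gamma(u)-\gamma(t)}{\|\gamma(u)-\gamma(t)\|}\big\rangle\le\lambda$. *)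

theory Defs
  imports "HOL-Analysis.Analysis"
begin

definition lambda_curve :: "real \<Rightarrow> real set \<Rightarrow> (real \<Rightarrow> 'a::euclidean_space) \<Rightarrow> bool" where
  "lambda_curve lam I \<gamma> \<longleftrightarrow>
     (\<forall>t1\<in>I. \<forall>t2\<in>I. \<forall>t3\<in>I. t1 \<le> t2 \<and> t2 \<le> t3 \<longrightarrow>
        norm (\<gamma> t1 - \<gamma> t2) \<le> norm (\<gamma> t1 - \<gamma> t3) + lam * norm (\<gamma> t2 - \<gamma> t3))"

text \<open>Forward secants at t: unit vectors that are limits of normalized differences
  along sequences in I approaching t strictly from the right (differences nonzero,
  so that the quotients are defined).\<close>

definition sec_plus :: "real set \<Rightarrow> (real \<Rightarrow> 'a::euclidean_space) \<Rightarrow> real \<Rightarrow> 'a set" where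
  "sec_plus I \<gamma> t = {q. norm q = 1 \<and>
     (\<exists>tk :: nat \<Rightarrow> real. (\<forall>k. tk k \<in> I \<and> tk k > t \<and> \<gamma> (tk k) \<noteq> \<gamma> t) \<and>
        tk \<longlonglongrightarrow> t \<and>
        (\<lambda>k. (\<gamma> (tk k) - \<gamma> t) /\<^sub>R norm (\<gamma> (tk k) - \<gamma> t)) \<longlonglongrightarrow> q)}"

definition cone_property :: "real \<Rightarrow> real set \<Rightarrow> (real \<Rightarrow> 'a::euclidean_space) \<Rightarrow> bool" where
  "cone_property lam I \<gamma> \<longleftrightarrow> continuous_on I \<gamma> \<and>
     (\<forall>t\<in>I. \<forall>q\<in>sec_plus I \<gamma> t. \<forall>u\<in>I. u < t \<and> \<gamma> u \<noteq> \<gamma> t \<longrightarrow>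
        inner q ((\<gamma> u - \<gamma> t) /\<^sub>R norm (\<gamma> u - \<gamma> t)) \<le> lam)"

end

theory Submission
  imports Defs
begin

lemma key_ineq:
  fixes a v :: "'a::real_inner"
  assumes h: "norm a \<le> norm (a - v) + lam * norm v" and nn: "0 \<le> norm a - lam * norm v"
  shows "2 * inner a v \<le> 2 * lam * norm v * norm a + (1 - lam^2) * (norm v)^2"
proof -
  have "(norm a - lam * norm v)^2 \<le> (norm (a - v))^2"
    using h nn by (intro power_mono) auto
  also have "(norm (a - v))^2 = (norm a)^2 - 2 * inner a v + (norm v)^2"
    by (simp add: power2_norm_eq_inner inner_diff inner_commute)
  finally show ?thesis by (simp add: power2_eq_square algebra_simps)
qed

theorem proposition2p6:
  fixes \<gamma> :: "real \<Rightarrow> 'a::euclidean_space" and I :: "real set" and lam :: real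
  assumes "-1 \<le> lam" and "lam < 1"
    and "is_interval I"
    and "continuous_on I \<gamma>"
    and "lambda_curve lam I \<gamma>"
  shows "cone_property lam I \<gamma>"
  unfolding cone_property_def
proof (intro conjI ballI impI)
  show "continuous_on I \<gamma>" by fact
  fix t q u assume tI: "t \<in> I" and qs: "q \<in> sec_plus I \<gamma> t" and uI: "u \<in> I"
    and ut: "u < t \<and> \<gamma> u \<noteq> \<gamma> t"
  from qs obtain tk where tk: "\<And>k. tk k \<in> I \<and> tk k > t \<and> \<gamma> (tk k) \<noteq> \<gamma> t"
    and tkl: "tk \<longlonglongrightarrow> t"
    and ql: "(\<lambda>k. (\<gamma> (tk k) - \<gamma> t) /\<^sub>R norm (\<gamma> (tk k) - \<gamma> t)) \<longlonglongrightarrow> q"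
    unfolding sec_plus_def by blast
  define a where "a = \<gamma> u - \<gamma> t"
  define v where "v = (\<lambda>k. \<gamma> (tk k) - \<gamma> t)"
  have apos: "norm a > 0" using ut by (simp add: a_def)
  have "(\<gamma> \<circ> tk) \<longlonglongrightarrow> \<gamma> t"
    using assms(4) tI tk tkl unfolding continuous_on_sequentially by blast
  hence "v \<longlonglongrightarrow> 0" unfolding v_def o_def using LIM_zero by blast
  hence el: "(\<lambda>k. norm (v k)) \<longlonglongrightarrow> 0" using tendsto_norm_zero by blast
  have "\<forall>\<^sub>F k in sequentially. norm (v k) < norm a / (\<bar>lam\<bar> + 1)"
    using order_tendstoD(2)[OF el] apos by simp
  hence ev: "\<forall>\<^sub>F k in sequentially. inner ((a /\<^sub>R norm a)) (v k /\<^sub>R norm (v k))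
      \<le> lam + (1 - lam^2) * norm (v k) / (2 * norm a)"
  proof eventually_elim
    case (elim k)
    have vne: "norm (v k) > 0" using tk[of k] by (simp add: v_def)
    have "lam * norm (v k) \<le> \<bar>lam\<bar> * norm (v k)" by (simp add: mult_right_mono)
    also have "\<dots> \<le> (\<bar>lam\<bar> + 1) * norm (v k)" using vne by simp
    also have "\<dots> < norm a" using elim by (simp add: field_simps)
    finally have nn: "0 \<le> norm a - lam * norm (v k)" by simp
    have h0: "norm (\<gamma> u - \<gamma> t) \<le> norm (\<gamma> u - \<gamma> (tk k)) + lam * norm (\<gamma> t - \<gamma> (tk k))"
      using assms(5) uI tI tk[of k] ut unfolding lambda_curve_def by force
    have h: "norm a \<le> norm (a - v k) + lam * norm (v k)"
      using h0 unfolding a_def v_def by (simp add: norm_minus_commute algebra_simps)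
    have k2: "2 * inner a (v k) \<le> 2 * lam * norm (v k) * norm a + (1 - lam^2) * (norm (v k))^2"
      by (rule key_ineq[OF h nn])
    have "inner ((a /\<^sub>R norm a)) (v k /\<^sub>R norm (v k)) = inner a (v k) / (norm a * norm (v k))"
      by (simp add: field_simps)
    also have "\<dots> \<le> lam + (1 - lam^2) * norm (v k) / (2 * norm a)"
      using k2 apos vne by (simp add: field_simps power2_eq_square)
    finally show ?case .
  qed
  have l1: "(\<lambda>k. inner ((a /\<^sub>R norm a)) (v k /\<^sub>R norm (v k))) \<longlonglongrightarrow> inner (a /\<^sub>R norm a) q"
    using ql unfolding v_def by (intro tendsto_intros)
  have l2: "(\<lambda>k. lam + (1 - lam^2) * norm (v k) / (2 * norm a)) \<longlonglongrightarrow> lam + (1 - lam^2) * 0 / (2 * norm a)"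
    using apos by (intro tendsto_intros el) auto
  have "inner (a /\<^sub>R norm a) q \<le> lam"
    using tendsto_le[OF _ l2 l1 ev] by simp
  thus "inner q ((\<gamma> u - \<gamma> t) /\<^sub>R norm (\<gamma> u - \<gamma> t)) \<le> lam"
    by (simp add: a_def inner_commute)
qed

end
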